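(* Let $\mathcal{G}=(\mathcal{V},\mathcal{E})$ be a directed graph with terminals $s,t$, let $f:2^{\mathcal{E}}\to\mathbb{R}_+$ be normalized, monotone nondecreasing and submodular, let $C^*$ be an $(s,t)$-cut minimizing $f$, let $\nu^*$ be the optimal value of the Maximum Cooperative Flow problem, and let $\mathcal{P}$ be the set of all $(s,t)$-paths in $\mathcal{G}$ (each viewed as a set of edges). Then $$\frac{f(C^* )}{\sum_{P\in\mathcal{P}}\min_{\emptyset\ne P'\subseteq P}\frac{f(P')}{|P'|}}\;\le\;\frac{f(C^* )}{\nu^*}\;\le\;\frac{f(C^* )}{\max_{P\in\mathcal{P}}\min_{\emptyset\ne P'\subseteq P}\frac{f(P')}{|P'|}}.$$
   Context: An $(s,t)$-cut is a set of edges whose removal disconnects all $s$-$t$ paths. The Maximum Cooperative Flow problem is: maximize $\nu\in\mathbb{R}$ over $\nu$ and $\varphi\in\mathbb{R}^{\mathcal{E}}$ subject to $\varphi\ge 0$; $\sum_{e\in A}\varphi(e)\le f(A)$ for all $A\subseteq\mathcal{E}$; and $\sum_{e\in\delta^+(u)}\varphi(e)-\sum_{e\in\delta^-(u)}\varphi(e)=d(u)\nu$ for all $u\in\mathcal{V}$, where $d(s)=1$, $d(t)=-1$, $d(u)=0$ otherwise, and $\delta^+(u)$, $\delta^-(u)$ are the edges leaving and entering $u$. (It is the dual of the relaxation $\min \tilde f(y)$ s.t. $x(v)-x(u)+y(e)\ge 0$ for $e=(u,v)$, $x(s)-x(t)\ge1$, $y\ge0$, with $\tilde f$ the Lovász extension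 of $f$.) *)

theory Defs
  imports Complex_Main
begin

definition st_paths :: "'v set \<Rightarrow> ('v \<times> 'v) set \<Rightarrow> 'v \<Rightarrow> 'v \<Rightarrow> ('v \<times> 'v) set set" where
  "st_paths V E s t = { set (zip vs (tl vs)) | vs.
      vs \<noteq> [] \<and> hd vs = s \<and> last vs = t \<and> distinct vs \<and> set vs \<subseteq> V \<and>
      set (zip vs (tl vs)) \<subseteq> E }"

definition st_cut :: "'v set \<Rightarrow> ('v \<times> 'v) set \<Rightarrow> 'v \<Rightarrow> 'v \<Rightarrow> ('v \<times> 'v) set \<Rightarrow> bool" where
  "st_cut V E s t C \<longleftrightarrow> C \<subseteq> E \<and> (\<forall>P \<in> st_paths V E s t. P \<inter> C \<noteq> {})"

definition normalized_monotone_submodular :: "'e set \<Rightarrow> ('e set \<Rightarrow> real) \<Rightarrow> bool" where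
  "normalized_monotone_submodular E f \<longleftrightarrow>
     f {} = 0 \<and> (\<forall>A \<subseteq> E. f A \<ge> 0) \<and>
     (\<forall>A B. A \<subseteq> B \<and> B \<subseteq> E \<longrightarrow> f A \<le> f B) \<and>
     (\<forall>A B. A \<subseteq> E \<and> B \<subseteq> E \<longrightarrow> f (A \<union> B) + f (A \<inter> B) \<le> f A + f B)"

definition demand :: "'v \<Rightarrow> 'v \<Rightarrow> 'v \<Rightarrow> real" where
  "demand s t u = (if u = s then 1 else if u = t then -1 else 0)"

definition coop_flow_feasible ::
  "'v set \<Rightarrow> ('v \<times> 'v) set \<Rightarrow> 'v \<Rightarrow> 'v \<Rightarrow> (('v \<times> 'v) set \<Rightarrow> real) \<Rightarrow> real \<Rightarrow> (('v \<times> 'v) \<Rightarrow> real) \<Rightarrow> bool" where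
  "coop_flow_feasible V E s t f \<nu> \<phi> \<longleftrightarrow>
     (\<forall>e \<in> E. \<phi> e \<ge> 0) \<and>
     (\<forall>A \<subseteq> E. (\<Sum>e\<in>A. \<phi> e) \<le> f A) \<and>
     (\<forall>u \<in> V. (\<Sum>e\<in>{e\<in>E. fst e = u}. \<phi> e) - (\<Sum>e\<in>{e\<in>E. snd e = u}. \<phi> e) = demand s t u * \<nu>)"

definition max_coop_flow_value ::
  "'v set \<Rightarrow> ('v \<times> 'v) set \<Rightarrow> 'v \<Rightarrow> 'v \<Rightarrow> (('v \<times> 'v) set \<Rightarrow> real) \<Rightarrow> real \<Rightarrow> bool" where
  "max_coop_flow_value V E s t f \<nu> \<longleftrightarrow>
     (\<exists>\<phi>. coop_flow_feasible V E s t f \<nu> \<phi>) \<and>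
     (\<forall>\<nu>' \<phi>. coop_flow_feasible V E s t f \<nu>' \<phi> \<longrightarrow> \<nu>' \<le> \<nu>)"

definition min_density :: "('e set \<Rightarrow> real) \<Rightarrow> 'e set \<Rightarrow> real" where
  "min_density f P = Min {f P' / real (card P') | P'. P' \<subseteq> P \<and> P' \<noteq> {}}"

end

theory Submission
  imports Defs
begin
lemma zip_tl_snoc: "vs \<noteq> [] \<Longrightarrow> zip (vs @ [z]) (tl (vs @ [z])) = zip vs (tl vs) @ [(last vs, z)]"
  by (induction vs rule: induct_list012) auto

lemma zip_tl_prefix: "set (zip xs (tl xs)) \<subseteq> set (zip (xs @ ys) (tl (xs @ ys)))"
proof (induction xs rule: induct_list012)
  case (3 x y zs)
  then show ?case by auto
qed (auto simp: tl_append split: list.splits)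

lemma rtrancl_path:
  assumes "(x,y) \<in> R\<^sup>*"
  shows "\<exists>vs. vs \<noteq> [] \<and> hd vs = x \<and> last vs = y \<and> distinct vs \<and>
     set (zip vs (tl vs)) \<subseteq> R \<and> set vs \<subseteq> {z. (x,z) \<in> R\<^sup>*}"
  using assms
proof (induction rule: rtrancl_induct)
  case base
  then show ?case by (intro exI[of _ "[x]"]) auto
next
  case (step y z)
  then obtain vs where vs: "vs \<noteq> []" "hd vs = x" "last vs = y" "distinct vs"
     "set (zip vs (tl vs)) \<subseteq> R" "set vs \<subseteq> {z. (x,z) \<in> R\<^sup>*}" by blast
  show ?case
  proof (cases "z \<in> set vs")
    case True
    then obtain a b where ab: "vs = a @ z # b" by (meson split_list)
    have "set (zip (a @ [z]) (tl (a @ [z]))) \<subseteq> set (zip vs (tl vs))"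
      using zip_tl_prefix[of "a @ [z]" b] ab by simp
    moreover have "hd (a @ [z]) = x" using vs ab by (cases a) auto
    ultimately show ?thesis using vs ab
      by (intro exI[of _ "a @ [z]"]) auto
  next
    case False
    have "set (zip (vs @ [z]) (tl (vs @ [z]))) \<subseteq> R"
      using zip_tl_snoc[OF vs(1), of z] vs(3,5) step(2) by simp
    moreover have "set (vs @ [z]) \<subseteq> {z. (x,z) \<in> R\<^sup>*}" using vs(6) step by auto
    ultimately show ?thesis using vs False
      by (intro exI[of _ "vs @ [z]"]) (simp add: hd_append)
  qed
qed
lemma map_fst_zip_tl: "map fst (zip vs (tl vs)) = butlast vs"
  by (induction vs rule: induct_list012) auto
lemma map_snd_zip_tl: "map snd (zip vs (tl vs)) = tl vs"
  by (induction vs rule: induct_list012) auto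

lemma ind_distinct: "distinct xs \<Longrightarrow> (\<Sum>x\<leftarrow>xs. if x = u then (1::real) else 0) = (if u \<in> set xs then 1 else 0)"
  by (simp add: sum.distinct_set_conv_list[symmetric])

lemma count_fst:
  assumes "distinct vs"
  shows "(\<Sum>e\<in>set (zip vs (tl vs)). if fst e = u then (1::real) else 0) = (if u \<in> set (butlast vs) then 1 else 0)"
proof -
  have d: "distinct (zip vs (tl vs))" using assms by (simp add: distinct_zipI1)
  have "(\<Sum>e\<in>set (zip vs (tl vs)). if fst e = u then (1::real) else 0)
     = (\<Sum>e\<leftarrow>zip vs (tl vs). if fst e = u then (1::real) else 0)"
    using d by (simp add: sum.distinct_set_conv_list)
  also have "\<dots> = (\<Sum>x\<leftarrow>map fst (zip vs (tl vs)). if x = u then (1::real) else 0)"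
    by (simp add: comp_def)
  also have "\<dots> = (if u \<in> set (butlast vs) then 1 else 0)"
    unfolding map_fst_zip_tl using assms by (intro ind_distinct) (simp add: distinct_butlast)
  finally show ?thesis .
qed

lemma count_snd:
  assumes "distinct vs"
  shows "(\<Sum>e\<in>set (zip vs (tl vs)). if snd e = u then (1::real) else 0) = (if u \<in> set (tl vs) then 1 else 0)"
proof -
  have d: "distinct (zip vs (tl vs))" using assms by (simp add: distinct_zipI1)
  have "(\<Sum>e\<in>set (zip vs (tl vs)). if snd e = u then (1::real) else 0)
     = (\<Sum>e\<leftarrow>zip vs (tl vs). if snd e = u then (1::real) else 0)"
    using d by (simp add: sum.distinct_set_conv_list)
  also have "\<dots> = (\<Sum>x\<leftarrow>map snd (zip vs (tl vs)). if x = u then (1::real) else 0)"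
    by (simp add: comp_def)
  also have "\<dots> = (if u \<in> set (tl vs) then 1 else 0)"
    unfolding map_snd_zip_tl using assms by (intro ind_distinct) (simp add: distinct_tl)
  finally show ?thesis .
qed

lemma butlast_mem: "distinct vs \<Longrightarrow> vs \<noteq> [] \<Longrightarrow> u \<in> set (butlast vs) \<longleftrightarrow> u \<in> set vs \<and> u \<noteq> last vs"
  by (induction vs) (auto dest: in_set_butlastD)
lemma tl_mem: "distinct vs \<Longrightarrow> vs \<noteq> [] \<Longrightarrow> u \<in> set (tl vs) \<longleftrightarrow> u \<in> set vs \<and> u \<noteq> hd vs"
  by (cases vs) auto

lemma md_props:
  fixes f :: "'e set \<Rightarrow> real"
  assumes "finite P" "P \<noteq> {}"
  shows "\<exists>P'. P' \<subseteq> P \<and> P' \<noteq> {} \<and> min_density f P = f P' / real (card P')"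
    and "\<And>P'. P' \<subseteq> P \<Longrightarrow> P' \<noteq> {} \<Longrightarrow> min_density f P \<le> f P' / real (card P')"
proof -
  let ?S = "{f P' / real (card P') | P'. P' \<subseteq> P \<and> P' \<noteq> {}}"
  have fin: "finite ?S"
  proof -
    have "?S = (\<lambda>P'. f P' / real (card P')) ` {P'. P' \<subseteq> P \<and> P' \<noteq> {}}" by blast
    moreover have "finite {P'. P' \<subseteq> P \<and> P' \<noteq> {}}" using assms(1) by simp
    ultimately show ?thesis by simp
  qed
  have ne: "?S \<noteq> {}" using assms(2) by blast
  show "\<exists>P'. P' \<subseteq> P \<and> P' \<noteq> {} \<and> min_density f P = f P' / real (card P')"
    using Min_in[OF fin ne] unfolding min_density_def by blast
  show "\<And>P'. P' \<subseteq> P \<Longrightarrow> P' \<noteq> {} \<Longrightarrow> min_density f P \<le> f P' / real (card P')"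
    unfolding min_density_def using fin by (intro Min_le) blast+
qed

lemma st_paths_props:
  assumes "P \<in> st_paths V E s t" "s \<noteq> t"
  shows "P \<subseteq> E" "finite P" "P \<noteq> {}"
proof -
  obtain vs where vs: "P = set (zip vs (tl vs))" "vs \<noteq> []" "hd vs = s" "last vs = t" "set (zip vs (tl vs)) \<subseteq> E"
    using assms(1) unfolding st_paths_def by blast
  show "P \<subseteq> E" "finite P" using vs by auto
  have "tl vs \<noteq> []" using vs assms(2) by (cases vs) auto
  then obtain x y zs where "vs = x # y # zs" using vs(2) by (cases vs; cases "tl vs") auto
  then show "P \<noteq> {}" using vs by auto
qed

lemma md_nonneg:
  assumes "normalized_monotone_submodular E f" "P \<subseteq> E" "finite P" "P \<noteq> {}"
  shows "0 \<le> min_density f P"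
proof -
  obtain P' where "P' \<subseteq> P" "P' \<noteq> {}" "min_density f P = f P' / real (card P')"
    using md_props(1)[OF assms(3,4)] by blast
  moreover have "0 \<le> f P'" using assms(1,2) \<open>P' \<subseteq> P\<close> unfolding normalized_monotone_submodular_def by auto
  ultimately show ?thesis by simp
qed

lemma path_lower:
  assumes E: "E \<subseteq> V \<times> V" and st: "s \<noteq> t" and nms: "normalized_monotone_submodular E f"
    and P: "P \<in> st_paths V E s t" and mx: "max_coop_flow_value V E s t f \<nu>"
    and finE: "finite E"
  shows "min_density f P \<le> \<nu>"
proof -
  obtain vs where vs: "P = set (zip vs (tl vs))" "vs \<noteq> []" "hd vs = s" "last vs = t" "distinct vs"
      "set (zip vs (tl vs)) \<subseteq> E"
    using P unfolding st_paths_def by blast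
  note pp = st_paths_props[OF P st]
  define m where "m = min_density f P"
  have m0: "0 \<le> m" unfolding m_def using md_nonneg[OF nms pp] .
  define \<phi> where "\<phi> e = (if e \<in> P then m else 0)" for e
  have "coop_flow_feasible V E s t f m \<phi>"
    unfolding coop_flow_feasible_def
  proof (intro conjI ballI allI impI)
    fix e show "0 \<le> \<phi> e" using m0 by (simp add: \<phi>_def)
  next
    fix A assume A: "A \<subseteq> E"
    have finA: "finite A" using A finE by (rule finite_subset)
    have eq: "(\<Sum>e\<in>A. \<phi> e) = m * real (card (A \<inter> P))"
      unfolding \<phi>_def using sum.inter_restrict[OF finA, of "\<lambda>_. m" P] by (simp add: mult.commute)
    have fA: "0 \<le> f A" using A nms unfolding normalized_monotone_submodular_def by auto
    show "(\<Sum>e\<in>A. \<phi> e) \<le> f A"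
    proof (cases "A \<inter> P = {}")
      case True then show ?thesis using eq fA by simp
    next
      case False
      have "m \<le> f (A \<inter> P) / real (card (A \<inter> P))"
        unfolding m_def by (rule md_props(2)[OF pp(2,3)]) (use False in auto)
      moreover have "0 < real (card (A \<inter> P))" using False pp(2) by (simp add: card_gt_0_iff)
      ultimately have "m * real (card (A \<inter> P)) \<le> f (A \<inter> P)" by (simp add: field_simps)
      also have "\<dots> \<le> f A" using nms A unfolding normalized_monotone_submodular_def by auto
      finally show ?thesis using eq by simp
    qed
  next
    fix u assume u: "u \<in> V"
    have stv: "s \<in> set vs" "t \<in> set vs" using vs(2,3,4) hd_in_set last_in_set by auto
    have o: "(\<Sum>e\<in>{e\<in>E. fst e = u}. \<phi> e) = m * (\<Sum>e\<in>P. if fst e = u then (1::real) else 0)"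
    proof -
      have "(\<Sum>e\<in>{e\<in>E. fst e = u}. \<phi> e) = (\<Sum>e\<in>E. if fst e = u then \<phi> e else 0)"
        using finE by (rule sum.inter_filter)
      also have "\<dots> = (\<Sum>e\<in>E. if e \<in> P then (if fst e = u then m else 0) else 0)"
        by (intro sum.cong) (auto simp: \<phi>_def)
      also have "\<dots> = (\<Sum>e\<in>E \<inter> P. (if fst e = u then m else 0))"
        using sum.inter_restrict[OF finE, symmetric] by simp
      also have "E \<inter> P = P" using pp(1) by blast
      also have "(\<Sum>e\<in>P. (if fst e = u then m else 0)) = m * (\<Sum>e\<in>P. if fst e = u then (1::real) else 0)"
        by (simp add: sum_distrib_left if_distrib cong: if_cong)
      finally show ?thesis .
    qed
    have i: "(\<Sum>e\<in>{e\<in>E. snd e = u}. \<phi> e) = m * (\<Sum>e\<in>P. if snd e = u then (1::real) else 0)"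
    proof -
      have "(\<Sum>e\<in>{e\<in>E. snd e = u}. \<phi> e) = (\<Sum>e\<in>E. if snd e = u then \<phi> e else 0)"
        using finE by (rule sum.inter_filter)
      also have "\<dots> = (\<Sum>e\<in>E. if e \<in> P then (if snd e = u then m else 0) else 0)"
        by (intro sum.cong) (auto simp: \<phi>_def)
      also have "\<dots> = (\<Sum>e\<in>E \<inter> P. (if snd e = u then m else 0))"
        using sum.inter_restrict[OF finE, symmetric] by simp
      also have "E \<inter> P = P" using pp(1) by blast
      also have "(\<Sum>e\<in>P. (if snd e = u then m else 0)) = m * (\<Sum>e\<in>P. if snd e = u then (1::real) else 0)"
        by (simp add: sum_distrib_left if_distrib cong: if_cong)
      finally show ?thesis .
    qed
    show "(\<Sum>e\<in>{e\<in>E. fst e = u}. \<phi> e) - (\<Sum>e\<in>{e\<in>E. snd e = u}. \<phi> e) = demand s t u * m"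
      unfolding o i vs(1) count_fst[OF vs(5)] count_snd[OF vs(5)]
        butlast_mem[OF vs(5,2)] tl_mem[OF vs(5,2)] vs(3,4)
      using st stv by (auto simp: demand_def)
  qed
  then show ?thesis using mx unfolding max_coop_flow_value_def m_def by blast
qed

lemma cut_upper:
  assumes finV: "finite V" and E: "E \<subseteq> V \<times> V" and sV: "s \<in> V"
    and feas: "coop_flow_feasible V E s t f \<nu> \<phi>" and cut: "st_cut V E s t C"
  shows "\<nu> \<le> (\<Sum>e\<in>C. \<phi> e)"
proof -
  have finE: "finite E" using finV E by (meson finite_SigmaI finite_subset)
  define R where "R = E - C"
  define S where "S = {u. (s,u) \<in> R\<^sup>*}"
  have SV: "S \<subseteq> V"
  proof
    fix u assume "u \<in> S"
    then have "(s,u) \<in> R\<^sup>*" by (simp add: S_def)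
    then show "u \<in> V"
    proof (cases rule: rtranclE)
      case base then show ?thesis using sV by simp
    next
      case (step y) then show ?thesis using E unfolding R_def by auto
    qed
  qed
  have finS: "finite S" using SV finV by (rule finite_subset)
  have sS: "s \<in> S" by (simp add: S_def)
  have tS: "t \<notin> S"
  proof
    assume "t \<in> S"
    then obtain vs where vs: "vs \<noteq> []" "hd vs = s" "last vs = t" "distinct vs"
      "set (zip vs (tl vs)) \<subseteq> R" "set vs \<subseteq> S"
      using rtrancl_path[of s t R] unfolding S_def by auto
    have "set (zip vs (tl vs)) \<in> st_paths V E s t"
      unfolding st_paths_def using vs SV unfolding R_def by blast
    then have "set (zip vs (tl vs)) \<inter> C \<noteq> {}" using cut unfolding st_cut_def by blast
    then show False using vs(5) unfolding R_def by blast
  qed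
  have phi0: "\<And>e. e \<in> E \<Longrightarrow> 0 \<le> \<phi> e" using feas unfolding coop_flow_feasible_def by blast
  have cons: "\<And>u. u \<in> V \<Longrightarrow> (\<Sum>e\<in>{e\<in>E. fst e = u}. \<phi> e) - (\<Sum>e\<in>{e\<in>E. snd e = u}. \<phi> e) = demand s t u * \<nu>"
    using feas unfolding coop_flow_feasible_def by blast
  define A where "A = {e\<in>E. fst e \<in> S}"
  define B where "B = {e\<in>E. snd e \<in> S}"
  have finA: "finite A" "finite B" using finE by (auto simp: A_def B_def)
  have sumA: "(\<Sum>u\<in>S. \<Sum>e\<in>{e\<in>E. fst e = u}. \<phi> e) = (\<Sum>e\<in>A. \<phi> e)"
  proof -
    have "(\<Sum>u\<in>S. \<Sum>e\<in>{e\<in>E. fst e = u}. \<phi> e) = (\<Sum>u\<in>S. \<Sum>e\<in>{x. x \<in> A \<and> fst x = u}. \<phi> e)"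
      by (intro sum.cong refl) (auto simp: A_def)
    also have "\<dots> = (\<Sum>e\<in>A. \<phi> e)" using finA(1) finS by (intro sum.group) (auto simp: A_def)
    finally show ?thesis .
  qed
  have sumB: "(\<Sum>u\<in>S. \<Sum>e\<in>{e\<in>E. snd e = u}. \<phi> e) = (\<Sum>e\<in>B. \<phi> e)"
  proof -
    have "(\<Sum>u\<in>S. \<Sum>e\<in>{e\<in>E. snd e = u}. \<phi> e) = (\<Sum>u\<in>S. \<Sum>e\<in>{x. x \<in> B \<and> snd x = u}. \<phi> e)"
      by (intro sum.cong refl) (auto simp: B_def)
    also have "\<dots> = (\<Sum>e\<in>B. \<phi> e)" using finA(2) finS by (intro sum.group) (auto simp: B_def)
    finally show ?thesis .
  qed
  have "(\<Sum>u\<in>S. (\<Sum>e\<in>{e\<in>E. fst e = u}. \<phi> e) - (\<Sum>e\<in>{e\<in>E. snd e = u}. \<phi> e))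
      = (\<Sum>u\<in>S. if u = s then \<nu> else 0)"
  proof (intro sum.cong refl)
    fix u assume "u \<in> S"
    then have uV: "u \<in> V" and ut: "u \<noteq> t" using SV tS by auto
    show "(\<Sum>e\<in>{e\<in>E. fst e = u}. \<phi> e) - (\<Sum>e\<in>{e\<in>E. snd e = u}. \<phi> e) = (if u = s then \<nu> else 0)"
      using cons[OF uV] ut by (simp add: demand_def)
  qed
  also have "\<dots> = \<nu>" using finS sS by simp
  finally have nu: "\<nu> = (\<Sum>e\<in>A. \<phi> e) - (\<Sum>e\<in>B. \<phi> e)"
    using sumA sumB by (simp add: sum_subtractf)
  have "(\<Sum>e\<in>A. \<phi> e) = (\<Sum>e\<in>A - B. \<phi> e) + (\<Sum>e\<in>A \<inter> B. \<phi> e)"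
    using finA(1) by (metis Diff_Diff_Int Diff_subset add.commute inf.commute sum.subset_diff)
  moreover have "(\<Sum>e\<in>A \<inter> B. \<phi> e) \<le> (\<Sum>e\<in>B. \<phi> e)"
    using finA(2) phi0 by (intro sum_mono2) (auto simp: B_def)
  moreover have "A - B \<subseteq> C"
  proof
    fix e assume e: "e \<in> A - B"
    show "e \<in> C"
    proof (rule ccontr)
      assume "e \<notin> C"
      then have "e \<in> R" using e by (auto simp: R_def A_def)
      moreover have "(s, fst e) \<in> R\<^sup>*" using e by (auto simp: A_def S_def)
      ultimately have "(s, snd e) \<in> R\<^sup>*" by (metis prod.collapse rtrancl.rtrancl_into_rtrancl)
      then show False using e by (auto simp: A_def B_def S_def)
    qed
  qed
  moreover have "C \<subseteq> E" using cut unfolding st_cut_def by blast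
  then have "(\<Sum>e\<in>A - B. \<phi> e) \<le> (\<Sum>e\<in>C. \<phi> e)" if "A - B \<subseteq> C"
    using that phi0 finE by (intro sum_mono2) (auto intro: finite_subset)
  ultimately show ?thesis using nu by linarith
qed

lemma sum_upper:
  assumes finV: "finite V" and E: "E \<subseteq> V \<times> V" and sV: "s \<in> V" and st: "s \<noteq> t"
    and feas: "coop_flow_feasible V E s t f \<nu> \<phi>"
  shows "\<nu> \<le> (\<Sum>P\<in>st_paths V E s t. min_density f P)"
proof -
  have finE: "finite E" using finV E by (meson finite_SigmaI finite_subset)
  let ?Ps = "st_paths V E s t"
  have finPs: "finite ?Ps"
  proof (rule finite_subset)
    show "?Ps \<subseteq> Pow E" using st_paths_props(1)[OF _ st] by blast
    show "finite (Pow E)" using finE by simp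
  qed
  have phi0: "\<And>e. e \<in> E \<Longrightarrow> 0 \<le> \<phi> e" using feas unfolding coop_flow_feasible_def by blast
  have capa: "\<And>A. A \<subseteq> E \<Longrightarrow> (\<Sum>e\<in>A. \<phi> e) \<le> f A" using feas unfolding coop_flow_feasible_def by blast
  have "\<forall>P\<in>?Ps. \<exists>e. e \<in> P \<and> \<phi> e \<le> min_density f P"
  proof
    fix P assume P: "P \<in> ?Ps"
    note pp = st_paths_props[OF P st]
    obtain P' where P': "P' \<subseteq> P" "P' \<noteq> {}" "min_density f P = f P' / real (card P')"
      using md_props(1)[OF pp(2,3)] by blast
    have finP': "finite P'" using P'(1) pp(2) by (rule finite_subset)
    have "Min (\<phi> ` P') \<in> \<phi> ` P'" using finP' P'(2) by (intro Min_in) auto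
    then obtain e where e1: "e \<in> P'" and e2: "\<phi> e = Min (\<phi> ` P')" by auto
    have e: "e \<in> P'" "\<And>x. x \<in> P' \<Longrightarrow> \<phi> e \<le> \<phi> x"
      using e1 apply simp
      unfolding e2 using finP' by (intro Min_le) auto
    have "real (card P') * \<phi> e \<le> (\<Sum>x\<in>P'. \<phi> x)" by (rule sum_bounded_below) (use e in auto)
    also have "\<dots> \<le> f P'" using capa P'(1) pp(1) by auto
    finally have "\<phi> e \<le> f P' / real (card P')"
      using finP' P'(2) by (simp add: field_simps card_gt_0_iff)
    then have le: "\<phi> e \<le> min_density f P" using P'(3) by simp
    have "e \<in> P" using e(1) P'(1) by (rule subsetD[rotated])
    then show "\<exists>e. e \<in> P \<and> \<phi> e \<le> min_density f P" using le by (intro exI[of _ e] conjI)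
  qed
  from bchoice[OF this] obtain g where g0: "\<forall>P\<in>?Ps. g P \<in> P \<and> \<phi> (g P) \<le> min_density f P" by blast
  then have g: "\<And>P. P \<in> ?Ps \<Longrightarrow> g P \<in> P \<and> \<phi> (g P) \<le> min_density f P" by blast
  have cut: "st_cut V E s t (g ` ?Ps)"
    unfolding st_cut_def using g st_paths_props(1)[OF _ st] by blast
  have "\<nu> \<le> (\<Sum>e\<in>g ` ?Ps. \<phi> e)" by (rule cut_upper[OF finV E sV feas cut])
  also have "\<dots> \<le> (\<Sum>P\<in>?Ps. \<phi> (g P))"
  proof -
    have "\<And>P. P \<in> ?Ps \<Longrightarrow> 0 \<le> \<phi> (g P)"
    proof -
      fix P assume P: "P \<in> ?Ps"
      have "g P \<in> E" using g[OF P] st_paths_props(1)[OF P st] by blast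
      then show "0 \<le> \<phi> (g P)" by (rule phi0)
    qed
    from sum_image_le[of ?Ps \<phi> g, OF finPs this] show ?thesis by (simp add: comp_def)
  qed
  also have "\<dots> \<le> (\<Sum>P\<in>?Ps. min_density f P)" using g by (intro sum_mono) auto
  finally show ?thesis .
qed

theorem lemma2:
  fixes V :: "'v set" and E :: "('v \<times> 'v) set" and s t :: 'v
    and f :: "('v \<times> 'v) set \<Rightarrow> real" and Cstar :: "('v \<times> 'v) set" and \<nu>star :: real
  assumes "finite V" and "E \<subseteq> V \<times> V" and "s \<in> V" and "t \<in> V" and "s \<noteq> t"
    and "normalized_monotone_submodular E f"
    and "st_cut V E s t Cstar"
    and "\<And>C. st_cut V E s t C \<Longrightarrow> f Cstar \<le> f C"
    and "max_coop_flow_value V E s t f \<nu>star"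
  shows "f Cstar / (\<Sum>P\<in>st_paths V E s t. min_density f P) \<le> f Cstar / \<nu>star
       \<and> f Cstar / \<nu>star \<le> f Cstar / (Max ((\<lambda>P. min_density f P) ` st_paths V E s t))"
proof -
  have finE: "finite E" using assms(1,2) by (meson finite_SigmaI finite_subset)
  let ?Ps = "st_paths V E s t"
  let ?F = "f Cstar"
  let ?\<Sigma> = "\<Sum>P\<in>?Ps. min_density f P"
  let ?M = "Max ((\<lambda>P. min_density f P) ` ?Ps)"
  have finPs: "finite ?Ps"
  proof (rule finite_subset)
    show "?Ps \<subseteq> Pow E" using st_paths_props(1)[OF _ assms(5)] by blast
    show "finite (Pow E)" using finE by simp
  qed
  have nn: "\<forall>A \<subseteq> E. f A \<ge> 0" and f0: "f {} = 0" using assms(6) unfolding normalized_monotone_submodular_def by blast+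
  have "Cstar \<subseteq> E" using assms(7) unfolding st_cut_def by blast
  then have F0: "0 \<le> ?F" using nn by blast
  show ?thesis
  proof (cases "?Ps = {}")
    case True
    have "st_cut V E s t {}" unfolding st_cut_def using True by auto
    then have "?F \<le> f {}" using assms(8) by blast
    then have "?F = 0" using F0 f0 by linarith
    then show ?thesis by simp
  next
    case False
    have md0: "\<And>P. P \<in> ?Ps \<Longrightarrow> 0 \<le> min_density f P"
    proof -
      fix P assume P: "P \<in> ?Ps"
      note pp = st_paths_props[OF P assms(5)]
      show "0 \<le> min_density f P" by (rule md_nonneg[OF assms(6) pp])
    qed
    have mdle: "\<And>P. P \<in> ?Ps \<Longrightarrow> min_density f P \<le> \<nu>star"
    proof -
      fix P assume P: "P \<in> ?Ps"
      show "min_density f P \<le> \<nu>star" by (rule path_lower[OF assms(2,5,6) P assms(9) finE])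
    qed
    obtain \<phi> where feas: "coop_flow_feasible V E s t f \<nu>star \<phi>" using assms(9) unfolding max_coop_flow_value_def by blast
    have up: "\<nu>star \<le> ?\<Sigma>" by (rule sum_upper[OF assms(1,2,3,5) feas])
    have Min: "?M \<in> (\<lambda>P. min_density f P) ` ?Ps" using finPs False by (intro Max_in) auto
    then obtain P0 where P0: "P0 \<in> ?Ps" "?M = min_density f P0" by blast
    have Mge: "\<And>P. P \<in> ?Ps \<Longrightarrow> min_density f P \<le> ?M" using finPs by (intro Max_ge) auto
    have M0: "0 \<le> ?M" using P0 md0[OF P0(1)] by simp
    have Mnu: "?M \<le> \<nu>star" using P0 mdle[OF P0(1)] by simp
    have S0: "0 \<le> ?\<Sigma>" using md0 by (intro sum_nonneg) auto
    have zero: "?\<Sigma> = 0" if "?M = 0"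
    proof (intro sum.neutral ballI)
      fix P assume "P \<in> ?Ps"
      then show "min_density f P = 0" using Mge[of P] md0[of P] that by linarith
    qed
    have zero2: "?\<Sigma> = 0" if "\<nu>star = 0"
    proof (intro sum.neutral ballI)
      fix P assume "P \<in> ?Ps"
      then show "min_density f P = 0" using mdle[of P] md0[of P] that by linarith
    qed
    show ?thesis
    proof
      show "?F / ?\<Sigma> \<le> ?F / \<nu>star"
      proof (cases "\<nu>star = 0")
        case True then show ?thesis using zero2 by simp
      next
        case False
        then have "0 < \<nu>star" using M0 Mnu by linarith
        then show ?thesis using up F0 by (intro divide_left_mono) auto
      qed
      show "?F / \<nu>star \<le> ?F / ?M"
      proof (cases "?M = 0")
        case True then have "\<nu>star = 0" using zero up Mnu by linarith
        then show ?thesis using True by simp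
      next
        case False
        then have "0 < ?M" using M0 by linarith
        then show ?thesis using Mnu F0 by (intro divide_left_mono) auto
      qed
    qed
  qed
qed

end
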